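(* Fix a scenario $i$ and a binary vector $\bar{\boldsymbol{x}}\in\{0,1\}^{\mathcal{J}}$ with $\mathcal{J}^o:=\{j\in\mathcal{J}:\bar x_j=1\}\neq\emptyset$. Let $j_i^*=\arg\max_{j'\in\mathcal{J}^o}u_{ij'}$. Define $$\bar\lambda_i=r_{ij_i^*},\qquad \bar\mu_{ij}=\begin{cases}\big[\max_{j'\in\mathcal{J}^o\setminus\{j_i^*\}}r_{ij'}-\bar\lambda_i\big]_+ & j=j_i^*,\\ 0 & j\in\mathcal{J}\setminus\{j_i^*\},\end{cases}$$ $$\bar\nu_{ij}=\begin{cases}0 & j\in\mathcal{J}^o,\\ \big[r_{ij}-\bar\lambda_i-\sum_{k\in\mathcal{J}:u_{ik}>u_{ij}}\bar\mu_{ik}\big]_+ & j\in\mathcal{J}\setminus\mathcal{J}^o,\end{cases}$$ where $[z]_+=\max\{z,0\}$ and a maximum over the empty set is $-\infty$ (so that $\bar\mu_{ij_i^*}=0$ if $\mathcal{J}^o=\{j_i^*\}$). Then $(\bar\lambda_i,\bar{\boldsymbol\nu}_i,\bar{\boldsymbol\mu}_i)$ is an optimal solution of $\mathrm{[DSP}_i]$ at $\boldsymbol{x}=\bar{\boldsymbol x}$, and the optimal values satisfy $\phi_i(\bar{\boldsymbol x})=r_{ij_i^*}$, equal to the optimal value of $\mathrm{[DSP}_i]$.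
   Context: Let $\mathcal{J}$ be a finite set of options and fix a scenario index $i$. For each $j\in\mathcal{J}$ let $r_{ij}\in\mathbb{R}$ (reward) and $u_{ij}\in\mathbb{R}$ (utility) be given, with the utilities pairwise distinct: $u_{ij}\neq u_{ik}$ for $j\neq k$. For $\boldsymbol x\in\mathbb{R}^{\mathcal{J}}$, the choice subproblem $\mathrm{[SP}_i]$ is the linear program $$\phi_i(\boldsymbol x)=\max_{\boldsymbol y_i}\ \sum_{j\in\mathcal{J}}r_{ij}y_{ij}\ \text{ s.t. }\ \sum_{j\in\mathcal{J}}y_{ij}=1;\ \ y_{ij}\le x_j\ \forall j\in\mathcal{J};\ \ \sum_{j\in\mathcal{J}:u_{ij}<u_{ik}}y_{ij}+x_k\le 1\ \forall k\in\mathcal{J};\ \ y_{ij}\ge 0\ \forall j.$$ Its LP dual $\mathrm{[DSP}_i]$, with variables $\lambda_i\in\mathbb{R}$, $\boldsymbol\nu_i,\boldsymbol\mu_i\in\mathbb{R}_+^{\mathcal{J}}$, is $$\min\ \lambda_i+\sum_{j\in\mathcal{J}}\mu_{ij}+\sum_{j\in\mathcal{J}}(\nu_{ij}-\mu_{ij})x_j\ \text{ s.t. }\ r_{ij}-\lambda_i-\nu_{ij}-\sum_{k\in\mathcal{J}:u_{ik}>u_{ij}}\mu_{ik}\le 0\ \ \forall j\in\mathcal{J},\ \ \boldsymbol\nu_i,\boldsymbol\mu_i\ge 0.$$ *)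

theory Defs
  imports Main "HOL.Real"
begin

text \<open>Choice subproblem [SP_i] for a fixed scenario i: options J, rewards r, utilities u.
  Vectors indexed by J are functions 'j => real (values outside J are irrelevant).\<close>

definition sp_feasible :: "'j set \<Rightarrow> ('j \<Rightarrow> real) \<Rightarrow> ('j \<Rightarrow> real) \<Rightarrow> ('j \<Rightarrow> real) \<Rightarrow> bool" where
  "sp_feasible J u x y \<longleftrightarrow>
     (\<Sum>j\<in>J. y j) = 1 \<and>
     (\<forall>j\<in>J. y j \<le> x j) \<and>
     (\<forall>k\<in>J. (\<Sum>j\<in>{j\<in>J. u j < u k}. y j) + x k \<le> 1) \<and>
     (\<forall>j\<in>J. 0 \<le> y j)"

definition sp_obj :: "'j set \<Rightarrow> ('j \<Rightarrow> real) \<Rightarrow> ('j \<Rightarrow> real) \<Rightarrow> real" where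
  "sp_obj J r y = (\<Sum>j\<in>J. r j * y j)"

definition phi :: "'j set \<Rightarrow> ('j \<Rightarrow> real) \<Rightarrow> ('j \<Rightarrow> real) \<Rightarrow> ('j \<Rightarrow> real) \<Rightarrow> real" where
  "phi J r u x = Sup (sp_obj J r ` {y. sp_feasible J u x y})"

definition dsp_feasible :: "'j set \<Rightarrow> ('j \<Rightarrow> real) \<Rightarrow> ('j \<Rightarrow> real) \<Rightarrow> real \<Rightarrow> ('j \<Rightarrow> real) \<Rightarrow> ('j \<Rightarrow> real) \<Rightarrow> bool" where
  "dsp_feasible J r u lam nu mu \<longleftrightarrow>
     (\<forall>j\<in>J. r j - lam - nu j - (\<Sum>k\<in>{k\<in>J. u k > u j}. mu k) \<le> 0) \<and>
     (\<forall>j\<in>J. 0 \<le> nu j) \<and> (\<forall>j\<in>J. 0 \<le> mu j)"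

definition dsp_obj :: "'j set \<Rightarrow> ('j \<Rightarrow> real) \<Rightarrow> real \<Rightarrow> ('j \<Rightarrow> real) \<Rightarrow> ('j \<Rightarrow> real) \<Rightarrow> real" where
  "dsp_obj J x lam nu mu = lam + (\<Sum>j\<in>J. mu j) + (\<Sum>j\<in>J. (nu j - mu j) * x j)"

definition dsp_optimal :: "'j set \<Rightarrow> ('j \<Rightarrow> real) \<Rightarrow> ('j \<Rightarrow> real) \<Rightarrow> ('j \<Rightarrow> real) \<Rightarrow> real \<Rightarrow> ('j \<Rightarrow> real) \<Rightarrow> ('j \<Rightarrow> real) \<Rightarrow> bool" where
  "dsp_optimal J r u x lam nu mu \<longleftrightarrow> dsp_feasible J r u lam nu mu \<and>
     (\<forall>lam' nu' mu'. dsp_feasible J r u lam' nu' mu' \<longrightarrow> dsp_obj J x lam nu mu \<le> dsp_obj J x lam' nu' mu')"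

definition dsp_value :: "'j set \<Rightarrow> ('j \<Rightarrow> real) \<Rightarrow> ('j \<Rightarrow> real) \<Rightarrow> ('j \<Rightarrow> real) \<Rightarrow> real" where
  "dsp_value J r u x = Inf {dsp_obj J x lam nu mu | lam nu mu. dsp_feasible J r u lam nu mu}"

end

theory Submission
  imports Defs
begin

theorem proposition1:
  fixes J :: "'j set" and r u xb :: "'j \<Rightarrow> real" and js :: 'j
    and Jo :: "'j set" and lamb :: real and mub nub :: "'j \<Rightarrow> real"
  assumes finJ: "finite J"
    and u_inj: "inj_on u J"
    and xb_bin: "\<forall>j\<in>J. xb j \<in> {0, 1}"
    and Jo_def: "Jo = {j\<in>J. xb j = 1}"
    and Jo_ne: "Jo \<noteq> {}"
    and js_mem: "js \<in> Jo"
    and js_max: "\<forall>j'\<in>Jo. u j' \<le> u js"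
    and lamb_def: "lamb = r js"
    and mub_def: "\<forall>j. mub j = (if j = js then
                     (if Jo - {js} = {} then 0 else max (Max (r ` (Jo - {js})) - lamb) 0)
                   else 0)"
    and nub_def: "\<forall>j. nub j = (if j \<in> Jo then 0
                   else max (r j - lamb - (\<Sum>k\<in>{k\<in>J. u k > u j}. mub k)) 0)"
  shows "dsp_optimal J r u xb lamb nub mub
    \<and> (\<exists>y. sp_feasible J u xb y \<and> sp_obj J r y = r js)
    \<and> (\<forall>y. sp_feasible J u xb y \<longrightarrow> sp_obj J r y \<le> r js)
    \<and> phi J r u xb = r js
    \<and> dsp_obj J xb lamb nub mub = r js
    \<and> dsp_value J r u xb = r js"
proof -
  have jsJ: "js \<in> J" and xjs: "xb js = 1" using js_mem Jo_def by auto
  have JoJ: "Jo \<subseteq> J" using Jo_def by auto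
  have x0: "xb j = 0" if "j \<in> J" "j \<notin> Jo" for j using that xb_bin Jo_def by auto
  have ult: "u j < u js" if "j \<in> Jo" "j \<noteq> js" for j
  proof -
    have "u j \<le> u js" using js_max that by auto
    moreover have "u j \<noteq> u js" using u_inj that jsJ JoJ by (auto dest: inj_onD)
    ultimately show ?thesis by simp
  qed
  have notJo: "k \<notin> Jo" if "u js < u k" for k
  proof
    assume "k \<in> Jo"
    hence "u k \<le> u js" using js_max by blast
    thus False using that by simp
  qed
  have prim: "sp_obj J r y = r js" if f: "sp_feasible J u xb y" for y
  proof -
    have s1: "(\<Sum>j\<in>J. y j) = 1" and le: "\<forall>j\<in>J. y j \<le> xb j"
      and c: "\<forall>k\<in>J. (\<Sum>j\<in>{j\<in>J. u j < u k}. y j) + xb k \<le> 1"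
      and nn: "\<forall>j\<in>J. 0 \<le> y j" using f unfolding sp_feasible_def by auto
    have "(\<Sum>j\<in>{j\<in>J. u j < u js}. y j) + xb js \<le> 1" using c jsJ by blast
    hence "(\<Sum>j\<in>{j\<in>J. u j < u js}. y j) \<le> 0" using xjs by simp
    moreover have "(\<Sum>j\<in>{j\<in>J. u j < u js}. y j) \<ge> 0" using nn by (intro sum_nonneg) auto
    ultimately have "(\<Sum>j\<in>{j\<in>J. u j < u js}. y j) = 0" by simp
    moreover have "finite {j\<in>J. u j < u js}" using finJ by simp
    moreover have "\<forall>j\<in>{j\<in>J. u j < u js}. 0 \<le> y j" using nn by simp
    ultimately have z1: "\<forall>j\<in>{j\<in>J. u j < u js}. y j = 0"
      using sum_nonneg_eq_0_iff[of "{j\<in>J. u j < u js}" y] by blast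
    have z: "y j = 0" if "j \<in> J" "j \<noteq> js" for j
    proof (cases "j \<in> Jo")
      case True thus ?thesis using z1 ult that by auto
    next
      case False
      hence "xb j = 0" using x0 that by blast
      moreover have "y j \<le> xb j" "0 \<le> y j" using le nn that by auto
      ultimately show ?thesis by simp
    qed
    have "(\<Sum>j\<in>J. y j) = y js + (\<Sum>j\<in>J-{js}. y j)" by (rule sum.remove[OF finJ jsJ])
    also have "(\<Sum>j\<in>J-{js}. y j) = 0" using z by auto
    finally have yjs: "y js = 1" using s1 by simp
    have "sp_obj J r y = r js * y js + (\<Sum>j\<in>J-{js}. r j * y j)"
      unfolding sp_obj_def by (rule sum.remove[OF finJ jsJ])
    also have "(\<Sum>j\<in>J-{js}. r j * y j) = 0" using z by auto
    finally show ?thesis using yjs by simp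
  qed
  define y0 where "y0 = (\<lambda>j. if j = js then (1::real) else 0)"
  have f0: "sp_feasible J u xb y0"
    unfolding sp_feasible_def
  proof (intro conjI ballI)
    show "(\<Sum>j\<in>J. y0 j) = 1" unfolding y0_def using finJ jsJ by simp
  next
    fix j assume "j \<in> J" thus "y0 j \<le> xb j" unfolding y0_def using xjs xb_bin by auto
  next
    fix k assume k: "k \<in> J"
    have "(\<Sum>j\<in>{j\<in>J. u j < u k}. y0 j) = (if js \<in> {j\<in>J. u j < u k} then 1 else 0)"
      unfolding y0_def using finJ by (simp add: sum.delta)
    thus "(\<Sum>j\<in>{j\<in>J. u j < u k}. y0 j) + xb k \<le> 1"
      using notJo[of k] x0[OF k] xb_bin k by auto
  next
    fix j show "0 \<le> y0 j" unfolding y0_def by simp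
  qed
  have img: "sp_obj J r ` {y. sp_feasible J u xb y} = {r js}"
  proof
    show "sp_obj J r ` {y. sp_feasible J u xb y} \<subseteq> {r js}" using prim by auto
    show "{r js} \<subseteq> sp_obj J r ` {y. sp_feasible J u xb y}" using prim f0 by auto
  qed
  have phi: "phi J r u xb = r js" unfolding phi_def img by simp
  have mnn: "0 \<le> mub j" for j
    using mub_def[rule_format, of j] by (simp split: if_splits)
  have nnn: "0 \<le> nub j" for j
  proof -
    have "nub j = (if j \<in> Jo then 0
                   else max (r j - lamb - (\<Sum>k\<in>{k\<in>J. u k > u j}. mub k)) 0)"
      using nub_def by blast
    thus ?thesis by (simp split: if_splits)
  qed
  have dfeas: "dsp_feasible J r u lamb nub mub"
    unfolding dsp_feasible_def
  proof (intro conjI ballI)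
    fix j assume j: "j \<in> J"
    show "r j - lamb - nub j - (\<Sum>k\<in>{k\<in>J. u k > u j}. mub k) \<le> 0"
    proof (cases "j \<in> Jo")
      case False thus ?thesis using nub_def by simp
    next
      case True
      show ?thesis
      proof (cases "j = js")
        case True
        have "(\<Sum>k\<in>{k\<in>J. u k > u j}. mub k) \<ge> 0" using mnn by (intro sum_nonneg) auto
        thus ?thesis using True lamb_def nub_def js_mem by simp
      next
        case False
        have jm: "j \<in> Jo - {js}" using True False by simp
        have "r j \<le> Max (r ` (Jo - {js}))"
          using jm finJ JoJ by (intro Max_ge) (auto intro: finite_subset)
        hence mj: "r j - lamb \<le> mub js" using mub_def jm by auto
        have "(\<Sum>k\<in>{k\<in>J. u k > u j}. mub k) = mub js"
        proof -
          have "(\<Sum>k\<in>{k\<in>J. u k > u j}. mub k) = (\<Sum>k\<in>{k\<in>J. u k > u j}. if k = js then mub js else 0)"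
            using mub_def by (intro sum.cong) auto
          also have "\<dots> = mub js" using finJ jsJ ult[OF True False] by (simp add: sum.delta)
          finally show ?thesis .
        qed
        thus ?thesis using mj nub_def True by simp
      qed
    qed
  qed (auto simp: mnn nnn)
  have dobj: "dsp_obj J xb lamb nub mub = r js"
  proof -
    have a: "(\<Sum>j\<in>J. mub j) = mub js"
    proof -
      have "(\<Sum>j\<in>J. mub j) = (\<Sum>j\<in>J. if j = js then mub js else 0)"
        using mub_def by (intro sum.cong) auto
      thus ?thesis using finJ jsJ by (simp add: sum.delta)
    qed
    have b: "(\<Sum>j\<in>J. (nub j - mub j) * xb j) = - mub js"
    proof -
      have "(\<Sum>j\<in>J. (nub j - mub j) * xb j) = (\<Sum>j\<in>J. if j = js then - mub js else 0)"
      proof (intro sum.cong refl)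
        fix j assume j: "j \<in> J"
        show "(nub j - mub j) * xb j = (if j = js then - mub js else 0)"
        proof (cases "j \<in> Jo")
          case True thus ?thesis using nub_def mub_def Jo_def by auto
        next
          case False thus ?thesis using x0[OF j] js_mem by auto
        qed
      qed
      thus ?thesis using finJ jsJ by (simp add: sum.delta)
    qed
    show ?thesis unfolding dsp_obj_def a b lamb_def by simp
  qed
  have weak: "r js \<le> dsp_obj J xb lam' nu' mu'" if df: "dsp_feasible J r u lam' nu' mu'" for lam' nu' mu'
  proof -
    define S where "S = {k\<in>J. u k > u js}"
    have c: "r js - lam' - nu' js - (\<Sum>k\<in>S. mu' k) \<le> 0"
      using df jsJ unfolding dsp_feasible_def S_def by blast
    have nn: "\<forall>j\<in>J. 0 \<le> nu' j" "\<forall>j\<in>J. 0 \<le> mu' j" using df unfolding dsp_feasible_def by auto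
    define g where "g j = (if xb j = 1 then nu' j else mu' j)" for j
    have eq: "dsp_obj J xb lam' nu' mu' = lam' + (\<Sum>j\<in>J. g j)"
    proof -
      have "(\<Sum>j\<in>J. mu' j) + (\<Sum>j\<in>J. (nu' j - mu' j) * xb j) = (\<Sum>j\<in>J. g j)"
        unfolding sum.distrib[symmetric] g_def using xb_bin by (intro sum.cong) auto
      thus ?thesis unfolding dsp_obj_def by simp
    qed
    have gnn: "\<forall>j\<in>J. 0 \<le> g j" using nn unfolding g_def by auto
    have sub: "insert js S \<subseteq> J" using jsJ S_def by auto
    have "(\<Sum>j\<in>insert js S. g j) \<le> (\<Sum>j\<in>J. g j)"
      using sum_mono2[OF finJ sub] gnn by auto
    moreover have "(\<Sum>j\<in>insert js S. g j) = g js + (\<Sum>j\<in>S. g j)"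
      using finJ S_def by (intro sum.insert) auto
    moreover have "(\<Sum>j\<in>S. g j) = (\<Sum>j\<in>S. mu' j)"
    proof (intro sum.cong refl)
      fix k assume "k \<in> S" thus "g k = mu' k" using notJo[of k] x0[of k] unfolding S_def g_def by auto
    qed
    moreover have "g js = nu' js" using xjs g_def by simp
    ultimately show ?thesis using eq c by linarith
  qed
  have dopt: "dsp_optimal J r u xb lamb nub mub"
    unfolding dsp_optimal_def using dfeas weak dobj by auto
  have dval: "dsp_value J r u xb = r js"
    unfolding dsp_value_def
  proof (rule cInf_eq_minimum)
    show "r js \<in> {dsp_obj J xb lam nu mu |lam nu mu. dsp_feasible J r u lam nu mu}"
      using dfeas dobj by force
  next
    fix z assume "z \<in> {dsp_obj J xb lam nu mu |lam nu mu. dsp_feasible J r u lam nu mu}"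
    thus "r js \<le> z" using weak by auto
  qed
  show ?thesis using dopt f0 prim phi dobj dval by auto
qed

end
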